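(* Let $\mathcal{S}$ be a state space and let $\mathsf{M}^{(1)},\mathsf{M}^{(2)}$ be dichotomic measurements on $\mathcal{S}$. If $\bar P(\mathsf{M}^{(1)},\mathsf{M}^{(2)})<1$, then $\mathsf{M}^{(1)}$ and $\mathsf{M}^{(2)}$ are not maximally incompatible.
   Context: General probabilistic theory setting: a state space $\mathcal{S}$ is a compact convex subset of a finite-dimensional real vector space, embedded as a base of a closed generating proper cone in a vector space $V$, with unit effect $u$. Effects are linear functionals $e$ on $V$ with $0\le e\le1$ on $\mathcal{S}$; $\|f\|=\max_{s\in\mathcal{S}}|f(s)|$. A measurement with finite outcome set $\Omega$ is a map $x\mapsto\mathsf{M}_x$ to effects with $\sum_x\mathsf{M}_x=u$; a dichotomic measurement has outcome set $\{+,-\}$. For dichotomic $\mathsf{M}^{(1)},\mathsf{M}^{(2)}$, $\bar P(\mathsf{M}^{(1)},\mathsf{M}^{(2)})=\frac18\sum_{x,y\in\{+,-\}}\|\mathsf{M}^{(1)}_x+\mathsf{M}^{(2)}_y\|$. A measurement $\mathsf{T}$ is trivial if $\mathsf{T}_x=p_xu$ for a probability distribution $(p_x)$. Two measurements with outcome sets $\Omega_1,\Omega_2$ are compatible if there is a measurement $\mathsf{J}$ on $\Omega_1\times\Omega_2$ whose marginals are the two measurements. The degree of incompatibility $d(\mathsf{M}^{(1)},\mathsf{M}^{(2)})$ is the maximal $\lambda\in[0,1]$ such that $\lambda\mathsf{M}^{(1)}+(1-\lambda)\mathsf{T}^{(1)}$ and $\lambda\mathsf{M}^{(2)}+(1-\lambda)\mathsf{T}^{(2)}$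 are compatible for some trivial measurements $\mathsf{T}^{(1)},\mathsf{T}^{(2)}$; it always satisfies $d\ge\frac12$, and the measurements are maximally incompatible if $d(\mathsf{M}^{(1)},\mathsf{M}^{(2)})=\frac12$. *)

theory Defs
  imports "HOL-Analysis.Analysis"
begin

text \<open>A state space S is a compact convex set which is a base of the
  closed, generating, proper cone K = cone hull S, with unit effect u (linear, u = 1 on S,
  u > 0 on K minus 0, and S = K intersected with the hyperplane u = 1).\<close>

definition state_space :: "'v::euclidean_space set \<Rightarrow> ('v \<Rightarrow> real) \<Rightarrow> bool" where
  "state_space S u \<longleftrightarrow>
     S \<noteq> {} \<and> compact S \<and> convex S \<and> linear u \<and>
     closed (cone hull S) \<and>
     (cone hull S) \<inter> uminus ` (cone hull S) = {0} \<and>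
     {x - y | x y. x \<in> cone hull S \<and> y \<in> cone hull S} = UNIV \<and>
     (\<forall>x \<in> cone hull S. x \<noteq> 0 \<longrightarrow> u x > 0) \<and>
     S = {x \<in> cone hull S. u x = 1}"

definition effect :: "'v::euclidean_space set \<Rightarrow> ('v \<Rightarrow> real) \<Rightarrow> bool" where
  "effect S e \<longleftrightarrow> linear e \<and> (\<forall>s\<in>S. 0 \<le> e s \<and> e s \<le> 1)"

definition fnorm :: "'v::euclidean_space set \<Rightarrow> ('v \<Rightarrow> real) \<Rightarrow> real" where
  "fnorm S f = (SUP s\<in>S. \<bar>f s\<bar>)"

definition measurement ::
  "'v::euclidean_space set \<Rightarrow> ('v \<Rightarrow> real) \<Rightarrow> 'x set \<Rightarrow> ('x \<Rightarrow> 'v \<Rightarrow> real) \<Rightarrow> bool" where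
  "measurement S u \<Omega> M \<longleftrightarrow> finite \<Omega> \<and> (\<forall>x\<in>\<Omega>. effect S (M x)) \<and>
     (\<lambda>v. \<Sum>x\<in>\<Omega>. M x v) = u"

text \<open>Dichotomic measurements: outcome set bool (True = +, False = -).\<close>
definition Pbar :: "'v::euclidean_space set \<Rightarrow> (bool \<Rightarrow> 'v \<Rightarrow> real) \<Rightarrow> (bool \<Rightarrow> 'v \<Rightarrow> real) \<Rightarrow> real" where
  "Pbar S M1 M2 = (1/8) * (\<Sum>x\<in>(UNIV::bool set). \<Sum>y\<in>(UNIV::bool set).
       fnorm S (\<lambda>v. M1 x v + M2 y v))"

definition trivial_meas ::
  "('v \<Rightarrow> real) \<Rightarrow> 'x set \<Rightarrow> ('x \<Rightarrow> 'v \<Rightarrow> real) \<Rightarrow> bool" where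
  "trivial_meas u \<Omega> T \<longleftrightarrow> (\<exists>p. (\<forall>x\<in>\<Omega>. 0 \<le> p x) \<and> sum p \<Omega> = 1 \<and>
     (\<forall>x\<in>\<Omega>. T x = (\<lambda>v. p x * u v)))"

definition compatible ::
  "'v::euclidean_space set \<Rightarrow> ('v \<Rightarrow> real) \<Rightarrow> 'x set \<Rightarrow> ('x \<Rightarrow> 'v \<Rightarrow> real)
     \<Rightarrow> 'y set \<Rightarrow> ('y \<Rightarrow> 'v \<Rightarrow> real) \<Rightarrow> bool" where
  "compatible S u \<Omega>1 M1 \<Omega>2 M2 \<longleftrightarrow>
     (\<exists>J. measurement S u (\<Omega>1 \<times> \<Omega>2) J \<and>
        (\<forall>x\<in>\<Omega>1. M1 x = (\<lambda>v. \<Sum>y\<in>\<Omega>2. J (x, y) v)) \<and>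
        (\<forall>y\<in>\<Omega>2. M2 y = (\<lambda>v. \<Sum>x\<in>\<Omega>1. J (x, y) v)))"

definition mix :: "real \<Rightarrow> ('x \<Rightarrow> 'v \<Rightarrow> real) \<Rightarrow> ('x \<Rightarrow> 'v \<Rightarrow> real) \<Rightarrow> 'x \<Rightarrow> 'v \<Rightarrow> real" where
  "mix l M T = (\<lambda>x v. l * M x v + (1 - l) * T x v)"

definition degree ::
  "'v::euclidean_space set \<Rightarrow> ('v \<Rightarrow> real) \<Rightarrow> 'x set \<Rightarrow> ('x \<Rightarrow> 'v \<Rightarrow> real)
     \<Rightarrow> 'y set \<Rightarrow> ('y \<Rightarrow> 'v \<Rightarrow> real) \<Rightarrow> real" where
  "degree S u \<Omega>1 M1 \<Omega>2 M2 = Sup {l \<in> {0..1}. \<exists>T1 T2. trivial_meas u \<Omega>1 T1 \<and> trivial_meas u \<Omega>2 T2 \<and>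
       compatible S u \<Omega>1 (mix l M1 T1) \<Omega>2 (mix l M2 T2)}"

definition max_incompatible ::
  "'v::euclidean_space set \<Rightarrow> ('v \<Rightarrow> real) \<Rightarrow> (bool \<Rightarrow> 'v \<Rightarrow> real) \<Rightarrow> (bool \<Rightarrow> 'v \<Rightarrow> real) \<Rightarrow> bool" where
  "max_incompatible S u M1 M2 \<longleftrightarrow> degree S u UNIV M1 UNIV M2 = 1/2"

end

theory Submission
  imports Defs
begin

lemma lin_J:
  fixes f g h :: "'v::euclidean_space \<Rightarrow> real"
  assumes "linear f" "linear g" "linear h"
  shows "linear (\<lambda>v. l * (f v + g v) - c * h v)"
  using assms unfolding linear_iff by (simp add: algebra_simps)

lemma lin_if:
  fixes f :: "'v::euclidean_space \<Rightarrow> real"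
  assumes "linear f"
  shows "linear (\<lambda>v. if P then f v else 0)"
  using assms unfolding linear_iff by auto

theorem corollary2:
  fixes S :: "'v::euclidean_space set" and u :: "'v \<Rightarrow> real"
    and M1 M2 :: "bool \<Rightarrow> 'v \<Rightarrow> real"
  assumes "state_space S u"
    and "measurement S u UNIV M1"
    and "measurement S u UNIV M2"
    and "Pbar S M1 M2 < 1"
  shows "\<not> max_incompatible S u M1 M2"
proof -
  have ss: "S \<noteq> {}" "linear u" "\<And>s. s \<in> S \<Longrightarrow> u s = 1"
    using assms(1) unfolding state_space_def by auto
  have e1: "\<And>x. effect S (M1 x)"
    using assms(2) unfolding measurement_def UNIV_bool by (auto; metis (full_types))
  have s1: "\<And>v. M1 True v + M1 False v = u v"
    using assms(2) unfolding measurement_def UNIV_bool by (auto dest: fun_cong)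
  have e2: "\<And>x. effect S (M2 x)"
    using assms(3) unfolding measurement_def UNIV_bool by (auto; metis (full_types))
  have s2: "\<And>v. M2 True v + M2 False v = u v"
    using assms(3) unfolding measurement_def UNIV_bool by (auto dest: fun_cong)
  have lin1: "\<And>x. linear (M1 x)" and lin2: "\<And>x. linear (M2 x)"
    using e1 e2 unfolding effect_def by auto
  have b1: "\<And>x s. s \<in> S \<Longrightarrow> 0 \<le> M1 x s \<and> M1 x s \<le> 1"
    using e1 unfolding effect_def by auto
  have b2: "\<And>x s. s \<in> S \<Longrightarrow> 0 \<le> M2 x s \<and> M2 x s \<le> 1"
    using e2 unfolding effect_def by auto
  obtain x0 y0 where n: "fnorm S (\<lambda>v. M1 x0 v + M2 y0 v) < 2"
  proof (rule ccontr)
    assume "\<not> thesis"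
    have h: "\<And>x y. fnorm S (\<lambda>v. M1 x v + M2 y v) \<ge> 2"
      using that \<open>\<not> thesis\<close> by (meson not_le)
    have "Pbar S M1 M2 \<ge> 1" unfolding Pbar_def UNIV_bool
      using h[of True True] h[of True False] h[of False True] h[of False False] by simp
    with assms(4) show False by simp
  qed
  define g where "g = 2 - fnorm S (\<lambda>v. M1 x0 v + M2 y0 v)"
  have gpos: "g > 0" using n g_def by simp
  define a where "a = (\<not> x0)"
  define b where "b = (\<not> y0)"
  have lowb: "M1 a s + M2 b s \<ge> g" if "s \<in> S" for s
  proof -
    have "\<bar>M1 x0 s + M2 y0 s\<bar> \<le> fnorm S (\<lambda>v. M1 x0 v + M2 y0 v)"
      unfolding fnorm_def
    proof (rule cSUP_upper[OF that, of "\<lambda>s. \<bar>M1 x0 s + M2 y0 s\<bar>"])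
      show "bdd_above ((\<lambda>s. \<bar>M1 x0 s + M2 y0 s\<bar>) ` S)"
        proof (rule bdd_aboveI[where M=2])
          fix z assume "z \<in> (\<lambda>s. \<bar>M1 x0 s + M2 y0 s\<bar>) ` S"
          then obtain t where "t \<in> S" "z = \<bar>M1 x0 t + M2 y0 t\<bar>" by blast
          then show "z \<le> 2" using b1[of t x0] b2[of t y0] by simp
        qed
    qed
    moreover have "M1 a s + M1 x0 s = 1" "M2 b s + M2 y0 s = 1"
      using s1[of s] s2[of s] ss(3)[OF that] unfolding a_def b_def
      by (cases x0; simp; cases y0; simp)+
    ultimately show ?thesis unfolding g_def by linarith
  qed
  define g' where "g' = min g 1"
  define l where "l = 1 / (2 - g')"
  have g': "0 < g'" "g' \<le> 1" "g' \<le> g" using gpos g'_def by auto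
  have l: "l > 1/2" "l \<le> 1" "2 * l - 1 = l * g'"
    using g' unfolding l_def by (auto simp: field_simps)
  define T1 where "T1 = (\<lambda>x v. if x = a then u v else (0::real))"
  define T2 where "T2 = (\<lambda>y v. if y = b then u v else (0::real))"
  have t1: "trivial_meas u UNIV T1"
    unfolding trivial_meas_def T1_def
    by (rule exI[where x="\<lambda>x. if x = a then 1 else 0"]) (auto simp: UNIV_bool)
  have t2: "trivial_meas u UNIV T2"
    unfolding trivial_meas_def T2_def
    by (rule exI[where x="\<lambda>x. if x = b then 1 else 0"]) (auto simp: UNIV_bool)
  define J where "J = (\<lambda>(x,y) v. l * ((if y = b then M1 x v else 0) + (if x = a then M2 y v else 0))
      - (if x = a \<and> y = b then 2 * l - 1 else 0) * u v)"
  have Jsum: "(\<lambda>v. \<Sum>p\<in>UNIV. J p v) = u"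
  proof
    fix v
    have eq: "(\<Sum>p\<in>UNIV. J p v) = J (True,True) v + J (True,False) v + J (False,True) v + J (False,False) v"
      by (simp add: UNIV_Times_UNIV[symmetric] UNIV_bool del: UNIV_Times_UNIV)
    have h1: "l * M1 False v + l * M1 True v = l * u v" using s1[of v]
      by (metis add.commute distrib_left)
    have h2: "l * M2 False v + l * M2 True v = l * u v" using s2[of v]
      by (metis add.commute distrib_left)
    have eq2: "J (True,True) v + J (True,False) v + J (False,True) v + J (False,False) v = u v"
      unfolding J_def using h1 h2
      by (cases a; cases b; simp add: algebra_simps)
    show "(\<Sum>p\<in>UNIV. J p v) = u v" using eq eq2 by simp
  qed
  have Jnn: "J p s \<ge> 0" if "s \<in> S" for p s
  proof -
    obtain x y where p: "p = (x,y)" by fastforce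
    have "l * g' \<le> l * (M1 a s + M2 b s)"
      using lowb[OF that] g' l by (intro mult_left_mono) auto
    then show ?thesis unfolding p J_def using l b1[OF that] b2[OF that] ss(3)[OF that]
      by (auto simp: algebra_simps)
  qed
  have Jle: "J p s \<le> 1" if "s \<in> S" for p s
  proof -
    have "J p s \<le> (\<Sum>q\<in>UNIV. J q s)"
      by (rule member_le_sum) (auto intro: Jnn[OF that])
    also have "\<dots> = 1" using Jsum ss(3)[OF that] by (metis (no_types, lifting))
    finally show ?thesis .
  qed
  have Jlin: "linear (J p)" for p
  proof -
    obtain x y where p: "p = (x,y)" by fastforce
    have "linear (\<lambda>v. l * ((if y = b then M1 x v else 0) + (if x = a then M2 y v else 0))
      - (if x = a \<and> y = b then 2 * l - 1 else 0) * u v)"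
      by (rule lin_J) (auto intro: lin_if simp: lin1 lin2 ss(2))
    then show ?thesis unfolding p J_def by simp
  qed
  have meas: "measurement S u (UNIV \<times> UNIV) J"
    unfolding measurement_def effect_def using Jsum Jlin Jnn Jle by auto
  have comp: "compatible S u UNIV (mix l M1 T1) UNIV (mix l M2 T2)"
    unfolding compatible_def
  proof (intro exI conjI ballI)
    show "measurement S u (UNIV \<times> UNIV) J" by (rule meas)
    fix x :: bool
    show "mix l M1 T1 x = (\<lambda>v. \<Sum>y\<in>UNIV. J (x, y) v)"
    proof
      fix v
      show "mix l M1 T1 x v = (\<Sum>y\<in>UNIV. J (x, y) v)"
        unfolding mix_def T1_def J_def UNIV_bool using s2[of v] distrib_left[of l "M2 False v" "M2 True v"]
        by (cases a; cases b; cases x; simp add: algebra_simps)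
    qed
  next
    fix y :: bool
    show "mix l M2 T2 y = (\<lambda>v. \<Sum>x\<in>UNIV. J (x, y) v)"
    proof
      fix v
      show "mix l M2 T2 y v = (\<Sum>x\<in>UNIV. J (x, y) v)"
        unfolding mix_def T2_def J_def UNIV_bool using s1[of v] distrib_left[of l "M1 False v" "M1 True v"]
        by (cases a; cases b; cases y; simp add: algebra_simps)
    qed
  qed
  have "l \<le> degree S u UNIV M1 UNIV M2"
    unfolding degree_def
  proof (rule cSup_upper)
    show "l \<in> {l \<in> {0..1}. \<exists>T1 T2. trivial_meas u UNIV T1 \<and> trivial_meas u UNIV T2 \<and>
       compatible S u UNIV (mix l M1 T1) UNIV (mix l M2 T2)}"
      using l t1 t2 comp by auto
    show "bdd_above {l \<in> {0..1}. \<exists>T1 T2. trivial_meas u UNIV T1 \<and> trivial_meas u UNIV T2 \<and>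
       compatible S u UNIV (mix l M1 T1) UNIV (mix l M2 T2)}"
      by (rule bdd_aboveI[where M=1]) auto
  qed
  then show ?thesis unfolding max_incompatible_def using l by linarith
qed

end
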